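(* Let $f\colon\mathbb{R}^n\to\mathbb{R}$ be differentiable, $L>0$, $0<t\le1$, and $\{\theta_k\}_{k=0}^\infty$ a positive sequence. Given $x_0$, define sequence (I) by $y_0=z_0=x_0$ and for $k\ge0$ \[ y_{k+1}=x_k-\tfrac1L\nabla f(x_k),\quad z_{k+1}=z_k-\tfrac{2t\theta_k}{L}\nabla f(x_k),\quad x_{k+1}=\Big(1-\tfrac1{\theta_{k+1}}\Big)y_{k+1}+\tfrac1{\theta_{k+1}}z_{k+1}, \] and sequence (II) by $y_0'=x_0'=x_0$ and for $k\ge0$ \[ y'_{k+1}=x'_k-\tfrac1L\nabla f(x'_k),\quad x'_{k+1}=y'_{k+1}+\frac{\theta_k-1}{\theta_{k+1}}(y'_{k+1}-y'_k)+(2t-1)\frac{\theta_k}{\theta_{k+1}}(y'_{k+1}-x'_k). \] Then $x_k=x'_k$ and $y_k=y'_k$ for all $k\ge0$. *)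

theory Defs
  imports "HOL-Analysis.Analysis"
begin

end

theory Submission
  imports Defs
begin

theorem lemma6:
  fixes f :: "real ^ 'n \<Rightarrow> real" and gf :: "real ^ 'n \<Rightarrow> real ^ 'n"
    and L t :: real and \<theta> :: "nat \<Rightarrow> real" and x0 :: "real ^ 'n"
    and x y z x' y' :: "nat \<Rightarrow> real ^ 'n"
  assumes grad: "\<And>v. GDERIV f v :> gf v"
    and L: "L > 0" and t: "0 < t" "t \<le> 1"
    and \<theta>pos: "\<And>k. \<theta> k > 0"
    and I0: "y 0 = x0" "z 0 = x0" "x 0 = x0"
    and Iy: "\<And>k. y (Suc k) = x k - (1 / L) *\<^sub>R gf (x k)"
    and Iz: "\<And>k. z (Suc k) = z k - (2 * t * \<theta> k / L) *\<^sub>R gf (x k)"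
    and Ix: "\<And>k. x (Suc k) = (1 - 1 / \<theta> (Suc k)) *\<^sub>R y (Suc k) + (1 / \<theta> (Suc k)) *\<^sub>R z (Suc k)"
    and II0: "y' 0 = x0" "x' 0 = x0"
    and IIy: "\<And>k. y' (Suc k) = x' k - (1 / L) *\<^sub>R gf (x' k)"
    and IIx: "\<And>k. x' (Suc k) = y' (Suc k) + ((\<theta> k - 1) / \<theta> (Suc k)) *\<^sub>R (y' (Suc k) - y' k)
                 + ((2 * t - 1) * \<theta> k / \<theta> (Suc k)) *\<^sub>R (y' (Suc k) - x' k)"
  shows "\<forall>k. x k = x' k \<and> y k = y' k"
proof -
  have inv: "\<And>k. z k = \<theta> k *\<^sub>R x k - (\<theta> k - 1) *\<^sub>R y k"
  proof -
    fix k show "z k = \<theta> k *\<^sub>R x k - (\<theta> k - 1) *\<^sub>R y k"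
    proof (cases k)
      case 0 then show ?thesis using I0 by (simp add: algebra_simps)
    next
      case (Suc m)
      have ne: "\<theta> (Suc m) \<noteq> 0" using \<theta>pos[of "Suc m"] by simp
      have "\<theta> (Suc m) *\<^sub>R x (Suc m) = (\<theta> (Suc m) - 1) *\<^sub>R y (Suc m) + z (Suc m)"
        unfolding Ix[of m] using ne by (simp add: scaleR_add_right algebra_simps)
      then show ?thesis using Suc by (simp add: algebra_simps)
    qed
  qed
  have "x k = x' k \<and> y k = y' k" for k
  proof (induction k)
    case 0 then show ?case using I0 II0 by simp
  next
    case (Suc k)
    then have xk: "x k = x' k" and yk: "y k = y' k" by auto
    have ys: "y (Suc k) = y' (Suc k)" using Iy IIy xk by simp
    have g: "(1 / L) *\<^sub>R gf (x k) = x k - y (Suc k)" using Iy[of k] by simp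
    have g2: "(2 * t * \<theta> k / L) *\<^sub>R gf (x k) = (2 * t * \<theta> k) *\<^sub>R ((1 / L) *\<^sub>R gf (x k))"
      by simp
    have zs: "z (Suc k) = \<theta> k *\<^sub>R x k - (\<theta> k - 1) *\<^sub>R y k - (2 * t * \<theta> k) *\<^sub>R (x k - y (Suc k))"
      using Iz[of k] inv[of k] g g2 by simp
    have ne: "\<theta> (Suc k) \<noteq> 0" using \<theta>pos[of "Suc k"] by simp
    have "x (Suc k) = y (Suc k) + (1 / \<theta> (Suc k)) *\<^sub>R (z (Suc k) - y (Suc k))"
      unfolding Ix[of k] by (simp add: algebra_simps)
    also have "z (Suc k) - y (Suc k) = (\<theta> k - 1) *\<^sub>R (y (Suc k) - y k) + ((2 * t - 1) * \<theta> k) *\<^sub>R (y (Suc k) - x k)"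
      unfolding zs by (simp add: algebra_simps)
    finally have "x (Suc k) = y (Suc k) + ((\<theta> k - 1) / \<theta> (Suc k)) *\<^sub>R (y (Suc k) - y k)
                 + ((2 * t - 1) * \<theta> k / \<theta> (Suc k)) *\<^sub>R (y (Suc k) - x k)"
      by (simp add: scaleR_add_right divide_inverse algebra_simps)
    then show ?case using IIx[of k] xk yk ys by simp
  qed
  then show ?thesis by blast
qed

end
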